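(* The convex hull $\hat\Omega_n$ of the spectral ball $\Omega_n$ equals $\{A\in\mathcal M_n: |\operatorname{tr}(A)|<n\}$.
   Context: $\mathcal M_n$ is the space of complex $n\times n$ matrices; $r(A)$ denotes the spectral radius of $A$; $\Omega_n=\{A\in\mathcal M_n: r(A)<1\}$; $\operatorname{tr}$ is the trace. *)

theory Defs
  imports "HOL-Analysis.Analysis"
begin

text \<open>Complex n x n matrices are rendered as complex^'n^'n, with n = CARD('n).
  The spectrum is the set of eigenvalues; the spectral radius is the maximal
  modulus of an eigenvalue (the spectrum of a complex square matrix is finite
  and nonempty).\<close>

definition mat_eigenvalues :: "complex^'n^'n \<Rightarrow> complex set" where
  "mat_eigenvalues A = {l. \<exists>v. v \<noteq> 0 \<and> A *v v = l *s v}"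

definition spectral_radius :: "complex^'n^'n \<Rightarrow> real" where
  "spectral_radius A = Max (cmod ` mat_eigenvalues A)"

definition spectral_ball :: "(complex^'n^'n) set" where
  "spectral_ball = {A. spectral_radius A < 1}"

end

theory Submission imports Defs "Jordan_Normal_Form.Schur_Decomposition" begin

no_notation vec_index (infixl "$" 100)

abbreviation smat :: "complex \<Rightarrow> complex^'n^'n" where "smat t \<equiv> Finite_Cartesian_Product.mat t"

lemma smat_mult: "smat t *v v = t *s v"
proof -
  have "(\<Sum>j\<in>UNIV. (if i = j then t else 0) * v $ j) = t * v $ i" for i
  proof -
    have "(\<Sum>j\<in>UNIV. (if i = j then t else 0) * v $ j) = (\<Sum>j\<in>UNIV. if i = j then t * v $ j else 0)"
      by (rule sum.cong) auto
    thus ?thesis by simp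
  qed
  thus ?thesis by (simp add: Finite_Cartesian_Product.vec_eq_iff matrix_vector_mult_def Finite_Cartesian_Product.mat_def)
qed

lemma sq_zero_ball:
  fixes N :: "complex^'n^'n"
  assumes N: "N ** N = 0" and t: "cmod t < 1"
  shows "smat t + N \<in> spectral_ball"
proof -
  have ev: "mat_eigenvalues (smat t + N) = {t}"
  proof (intro equalityI subsetI)
    fix l assume "l \<in> mat_eigenvalues (smat t + N)"
    then obtain v where v: "v \<noteq> 0" "(smat t + N) *v v = l *s v"
      unfolding mat_eigenvalues_def by auto
    hence Nv: "N *v v = (l - t) *s v"
      by (simp add: matrix_vector_mult_add_rdistrib smat_mult algebra_simps Finite_Cartesian_Product.vec_eq_iff)
    have "0 = (N ** N) *v v" using N by simp
    also have "\<dots> = N *v (N *v v)" by (simp add: matrix_vector_mul_assoc)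
    also have "\<dots> = ((l - t) * (l - t)) *s v" by (simp only: Nv vector_scalar_commute vector_smult_assoc)
    finally have "(l - t) * (l - t) = 0" using v(1) by (simp add: vector_mul_eq_0)
    thus "l \<in> {t}" by simp
  next
    fix l assume "l \<in> {t}"
    hence l: "l = t" by simp
    obtain v :: "complex^'n" where v: "v \<noteq> 0" "N *v v = 0"
    proof (cases "\<exists>w. N *v w \<noteq> 0")
      case True
      then obtain w where w: "N *v w \<noteq> 0" by blast
      have "N *v (N *v w) = 0" using N by (simp add: matrix_vector_mul_assoc)
      with w show ?thesis using that by blast
    next
      case False
      have "axis undefined (1::complex) \<noteq> 0" by (simp add: axis_eq_0_iff)
      with False show ?thesis using that by blast
    qed
    have "(smat t + N) *v v = l *s v"
      using v l by (simp add: matrix_vector_mult_add_rdistrib smat_mult)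
    with v show "l \<in> mat_eigenvalues (smat t + N)" unfolding mat_eigenvalues_def by blast
  qed
  show ?thesis using t by (simp add: spectral_ball_def spectral_radius_def ev)
qed

definition outer :: "('n \<Rightarrow> complex) \<Rightarrow> ('n \<Rightarrow> complex) \<Rightarrow> complex^'n^'n" where
  "outer x y = (\<chi> a b. x a * y b)"

lemma outer_sq:
  assumes "(\<Sum>k\<in>UNIV. y k * x k) = 0"
  shows "outer x y ** outer x y = 0"
proof -
  have "(\<Sum>k\<in>UNIV. x a * y k * (x k * y b)) = x a * y b * (\<Sum>k\<in>UNIV. y k * x k)" for a b
    by (simp add: sum_distrib_left algebra_simps)
  thus ?thesis using assms by (simp add: Finite_Cartesian_Product.vec_eq_iff matrix_matrix_mult_def outer_def)
qed

definition QQ :: "complex^'n^'n \<Rightarrow> bool" where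
  "QQ B \<longleftrightarrow> (\<forall>t r. cmod t < 1 \<longrightarrow> smat t + r *\<^sub>R B \<in> convex hull spectral_ball)"

lemma QQ_outer:
  assumes "(\<Sum>k\<in>UNIV. y k * x k) = 0"
  shows "QQ (outer x y)"
  unfolding QQ_def
proof (intro allI impI)
  fix t :: complex and r :: real assume t: "cmod t < 1"
  have e: "r *\<^sub>R outer x y = outer (\<lambda>a. of_real r * x a) y"
    by (simp only: outer_def Finite_Cartesian_Product.vec_eq_iff vector_scaleR_component vec_lambda_beta)
       (simp add: scaleR_conv_of_real)
  have "(\<Sum>k\<in>UNIV. y k * (of_real r * x k)) = of_real r * (\<Sum>k\<in>UNIV. y k * x k)"
    by (simp add: sum_distrib_left algebra_simps)
  hence "(\<Sum>k\<in>UNIV. y k * (of_real r * x k)) = 0" using assms by simp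
  from sq_zero_ball[OF outer_sq[OF this] t]
  show "smat t + r *\<^sub>R outer x y \<in> convex hull spectral_ball"
    unfolding e by (rule hull_inc)
qed

lemma QQ_0: "QQ 0"
  unfolding QQ_def using sq_zero_ball[of 0] by (auto intro: hull_inc)

lemma QQ_add:
  assumes "QQ B1" "QQ B2" shows "QQ (B1 + B2)"
  unfolding QQ_def
proof (intro allI impI)
  fix t :: complex and r :: real assume t: "cmod t < 1"
  have 1: "smat t + (2*r) *\<^sub>R B1 \<in> convex hull spectral_ball"
   and 2: "smat t + (2*r) *\<^sub>R B2 \<in> convex hull spectral_ball"
    using assms t unfolding QQ_def by auto
  have "(1/2) *\<^sub>R (smat t + (2*r) *\<^sub>R B1) + (1/2) *\<^sub>R (smat t + (2*r) *\<^sub>R B2)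
      \<in> convex hull spectral_ball"
    by (rule convexD[OF convex_convex_hull 1 2]) auto
  moreover have "(1/2) *\<^sub>R (smat t + (2*r) *\<^sub>R B1) + (1/2) *\<^sub>R (smat t + (2*r) *\<^sub>R B2)
      = smat t + r *\<^sub>R (B1 + B2)"
  proof -
    have h: "(1/2) *\<^sub>R X + (1/2) *\<^sub>R X = X" for X :: "complex^'n^'n"
      by (simp flip: scaleR_add_left)
    show ?thesis using h[of "smat t"] by (simp add: scaleR_add_right algebra_simps)
  qed
  ultimately show "smat t + r *\<^sub>R (B1 + B2) \<in> convex hull spectral_ball" by simp
qed

lemma QQ_sum:
  assumes "finite K" "\<And>k. k \<in> K \<Longrightarrow> QQ (f k)"
  shows "QQ (sum f K)"
  using assms by (induction K rule: finite_induct) (auto intro: QQ_0 QQ_add)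

definition EE :: "'n \<Rightarrow> 'n \<Rightarrow> complex \<Rightarrow> complex^'n^'n" where
  "EE a b c = (\<chi> p q. if p = a \<and> q = b then c else 0)"

lemma EE_outer: "EE a b c = outer (\<lambda>p. if p = a then c else 0) (\<lambda>q. if q = b then 1 else 0)"
  by (simp add: EE_def outer_def Finite_Cartesian_Product.vec_eq_iff)

lemma QQ_EE: assumes "a \<noteq> b" shows "QQ (EE a b c)"
  unfolding EE_outer
proof (rule QQ_outer)
  have "\<And>k. (if k = b then 1 else 0) * (if k = a then c else 0) = (0::complex)"
    using assms by auto
  thus "(\<Sum>k\<in>UNIV. (if k = b then 1 else 0) * (if k = a then c else 0)) = 0" by simp
qed

lemma QQ_D: "QQ (EE a a c - EE i i c)"
proof (cases "a = i")
  case True thus ?thesis using QQ_0 by simp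
next
  case False
  let ?x = "\<lambda>p. if p = a then c else if p = i then -c else 0"
  let ?y = "\<lambda>q. if q = a \<or> q = i then 1 else (0::complex)"
  have "(\<Sum>k\<in>UNIV. ?y k * ?x k) = (\<Sum>k\<in>UNIV. (if k = a then c else 0) + (if k = i then -c else 0))"
    by (rule sum.cong) (use False in auto)
  also have "\<dots> = 0" by (simp add: sum.distrib)
  finally have M: "QQ (outer ?x ?y)" by (rule QQ_outer)
  have "(EE a a c - EE i i c) $ p $ q = (outer ?x ?y + EE i a c + EE a i (-c)) $ p $ q" for p q
    using False by (cases "p = a"; cases "p = i"; cases "q = a"; cases "q = i") (simp_all add: EE_def outer_def)
  hence "EE a a c - EE i i c = outer ?x ?y + EE i a c + EE a i (-c)"
    by (simp add: Finite_Cartesian_Product.vec_eq_iff)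
  moreover have "QQ (outer ?x ?y + EE i a c + EE a i (-c))"
    using False by (intro QQ_add M QQ_EE) auto
  ultimately show ?thesis by simp
qed

lemma EE_sum: "finite K \<Longrightarrow> (\<Sum>k\<in>K. EE a b (f k)) = EE a b (\<Sum>k\<in>K. f k)"
  by (induction K rule: finite_induct) (auto simp: EE_def Finite_Cartesian_Product.vec_eq_iff)

lemma EE_decomp: "(\<Sum>a\<in>UNIV. \<Sum>b\<in>UNIV. EE a b (B $ a $ b)) = (B :: complex^'n^'n)"
proof -
  have "(\<Sum>a\<in>UNIV. \<Sum>b\<in>UNIV. (if p = a \<and> q = b then B $ a $ b else 0)) = B $ p $ q" for p q
  proof -
    have "(\<Sum>a\<in>UNIV. \<Sum>b\<in>UNIV. (if p = a \<and> q = b then B $ a $ b else 0))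
        = (\<Sum>a\<in>UNIV. if p = a then (\<Sum>b\<in>UNIV. if q = b then B $ a $ b else 0) else 0)"
      by (rule sum.cong) auto
    thus ?thesis by simp
  qed
  thus ?thesis by (simp add: EE_def Finite_Cartesian_Product.vec_eq_iff sum_component)
qed

lemma trace_zero_QQ:
  assumes "trace (B :: complex^'n^'n) = 0"
  shows "QQ B"
proof -
  define i :: 'n where "i = undefined"
  define F where "F a b = EE a b (B $ a $ b) - (if a = b then EE i i (B $ a $ b) else 0)" for a b
  have QF: "QQ (F a b)" for a b
    by (cases "a = b") (auto simp: F_def QQ_EE QQ_D)
  have "(\<Sum>a\<in>UNIV. \<Sum>b\<in>UNIV. F a b)
      = (\<Sum>a\<in>UNIV. \<Sum>b\<in>UNIV. EE a b (B $ a $ b)) - (\<Sum>a\<in>UNIV. \<Sum>b\<in>UNIV. (if a = b then EE i i (B $ a $ b) else 0))"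
    by (simp add: F_def sum_subtractf)
  also have "(\<Sum>a\<in>UNIV. \<Sum>b\<in>UNIV. (if a = b then EE i i (B $ a $ b) else 0)) = (\<Sum>a\<in>UNIV. EE i i (B $ a $ a))"
    by (rule sum.cong) auto
  also have "\<dots> = EE i i (trace B)" by (simp add: EE_sum trace_def)
  also have "\<dots> = 0" using assms by (simp add: EE_def Finite_Cartesian_Product.vec_eq_iff)
  finally have "(\<Sum>a\<in>UNIV. \<Sum>b\<in>UNIV. F a b) = B" by (simp add: EE_decomp)
  moreover have "QQ (\<Sum>a\<in>UNIV. \<Sum>b\<in>UNIV. F a b)"
    by (intro QQ_sum) (auto intro: QF)
  ultimately show ?thesis by simp
qed

definition tomat :: "(nat \<Rightarrow> 'n) \<Rightarrow> complex^'n^'n \<Rightarrow> complex Matrix.mat" where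
  "tomat h A = Matrix.mat CARD('n) CARD('n) (\<lambda>(i,j). A $ h i $ h j)"

lemma tomat_carrier: "tomat h (A::complex^'n^'n) \<in> carrier_mat CARD('n) CARD('n)"
  by (simp add: tomat_def)

lemma tomat_ev1:
  fixes A :: "complex^'n^'n"
  assumes h: "bij_betw h {0..<CARD('n)} (UNIV::'n set)"
    and ev: "eigenvalue (tomat h A) e"
  shows "e \<in> mat_eigenvalues A"
proof -
  let ?n = "CARD('n)"
  define g where "g = inv_into {0..<?n} h"
  have hg: "h (g k) = k" for k using h unfolding g_def by (meson UNIV_I bij_betw_inv_into_right)
  have gh: "j < ?n \<Longrightarrow> g (h j) = j" for j using h unfolding g_def
    by (simp add: bij_betw_def inv_into_f_f)
  have gn: "g k < ?n" for k using h unfolding g_def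
    by (metis UNIV_I atLeastLessThan_iff bij_betw_def inv_into_into)
  have dr: "dim_row (tomat h A) = ?n" by (simp add: tomat_def)
  from ev obtain v where "eigenvector (tomat h A) v e"
    unfolding eigenvalue_def by blast
  hence v: "v \<in> carrier_vec ?n" "v \<noteq> 0\<^sub>v ?n" "tomat h A *\<^sub>v v = e \<cdot>\<^sub>v v"
    unfolding eigenvector_def dr by auto
  define w :: "complex^'n" where "w = (\<chi> k. vec_index v (g k))"
  have "\<exists>j<?n. vec_index v j \<noteq> 0"
  proof (rule ccontr)
    assume "\<not> (\<exists>j<?n. vec_index v j \<noteq> 0)"
    hence "v = 0\<^sub>v ?n" using v(1) by (intro eq_vecI) auto
    with v(2) show False by contradiction
  qed
  then obtain j where j: "j < ?n" "vec_index v j \<noteq> 0" by blast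
  have "w $ h j \<noteq> 0" using j by (simp add: w_def gh)
  hence w0: "w \<noteq> 0" by auto
  have "(A *v w) $ k = (e *s w) $ k" for k
  proof -
    have "(A *v w) $ k = (\<Sum>k'\<in>UNIV. A $ k $ k' * w $ k')" by (simp add: matrix_vector_mult_def)
    also have "\<dots> = (\<Sum>j\<in>{0..<?n}. A $ k $ h j * w $ h j)"
      by (rule sum.reindex_bij_betw[OF h, symmetric])
    also have "\<dots> = (\<Sum>j\<in>{0..<?n}. A $ k $ h j * vec_index v j)"
      by (rule sum.cong) (auto simp: w_def gh)
    also have "\<dots> = vec_index (tomat h A *\<^sub>v v) (g k)"
      using v(1) gn[of k] by (simp add: tomat_def scalar_prod_def hg)
    also have "\<dots> = e * w $ k" using v(3) v(1) gn[of k] by (simp add: w_def)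
    finally show ?thesis by simp
  qed
  hence "A *v w = e *s w" by (simp add: Finite_Cartesian_Product.vec_eq_iff)
  with w0 show ?thesis unfolding mat_eigenvalues_def by blast
qed

lemma tomat_ev2:
  fixes A :: "complex^'n^'n"
  assumes h: "bij_betw h {0..<CARD('n)} (UNIV::'n set)"
    and ev: "e \<in> mat_eigenvalues A"
  shows "eigenvalue (tomat h A) e"
proof -
  let ?n = "CARD('n)"
  define g where "g = inv_into {0..<?n} h"
  have hg: "h (g k) = k" for k using h unfolding g_def by (meson UNIV_I bij_betw_inv_into_right)
  have gn: "g k < ?n" for k using h unfolding g_def
    by (metis UNIV_I atLeastLessThan_iff bij_betw_def inv_into_into)
  from ev obtain w where w: "w \<noteq> 0" "A *v w = e *s w" unfolding mat_eigenvalues_def by auto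
  define v where "v = Matrix.vec ?n (\<lambda>j. w $ h j)"
  from w(1) obtain k where k: "w $ k \<noteq> 0" by (auto simp: Finite_Cartesian_Product.vec_eq_iff)
  have v0: "v \<noteq> 0\<^sub>v ?n"
  proof
    assume "v = 0\<^sub>v ?n"
    hence "vec_index v (g k) = 0" using gn[of k] by simp
    thus False using k gn[of k] by (simp add: v_def hg)
  qed
  have "tomat h A *\<^sub>v v = e \<cdot>\<^sub>v v"
  proof (rule eq_vecI)
    fix i assume "i < dim_vec (e \<cdot>\<^sub>v v)"
    hence i: "i < ?n" by (simp add: v_def)
    have "vec_index (tomat h A *\<^sub>v v) i = (\<Sum>j\<in>{0..<?n}. A $ h i $ h j * w $ h j)"
      using i by (simp add: tomat_def scalar_prod_def v_def)
    also have "\<dots> = (\<Sum>k'\<in>UNIV. A $ h i $ k' * w $ k')"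
      by (rule sum.reindex_bij_betw[OF h])
    also have "\<dots> = (A *v w) $ h i" by (simp add: matrix_vector_mult_def)
    also have "\<dots> = e * w $ h i" using w(2) by simp
    also have "\<dots> = vec_index (e \<cdot>\<^sub>v v) i" using i by (simp add: v_def)
    finally show "vec_index (tomat h A *\<^sub>v v) i = vec_index (e \<cdot>\<^sub>v v) i" .
  qed (simp add: v_def tomat_def)
  moreover have "v \<in> carrier_vec (dim_row (tomat h A))" by (simp add: v_def tomat_def)
  ultimately show ?thesis using v0 unfolding eigenvalue_def eigenvector_def
    by (auto simp: tomat_def)
qed

lemma tomat_trace:
  fixes A :: "complex^'n^'n"
  assumes h: "bij_betw h {0..<CARD('n)} (UNIV::'n set)"
  shows "trace A = (\<Sum>i\<in>{0..<CARD('n)}. tomat h A $$ (i,i))"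
proof -
  have "trace A = (\<Sum>i\<in>{0..<CARD('n)}. A $ h i $ h i)"
    unfolding trace_def by (rule sum.reindex_bij_betw[OF h, symmetric])
  also have "\<dots> = (\<Sum>i\<in>{0..<CARD('n)}. tomat h A $$ (i,i))"
    by (rule sum.cong) (auto simp: tomat_def)
  finally show ?thesis .
qed

definition mtr :: "complex Matrix.mat \<Rightarrow> complex" where
  "mtr X = (\<Sum>i\<in>{0..<dim_row X}. X $$ (i,i))"

lemma mtr_comm:
  assumes "X \<in> carrier_mat n m" "Y \<in> carrier_mat m n"
  shows "mtr (X * Y) = mtr (Y * X)"
proof -
  have "mtr (X * Y) = (\<Sum>i\<in>{0..<n}. \<Sum>k\<in>{0..<m}. X $$ (i,k) * Y $$ (k,i))"
    using assms unfolding mtr_def by (intro sum.cong) (auto simp: scalar_prod_def)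
  also have "\<dots> = (\<Sum>k\<in>{0..<m}. \<Sum>i\<in>{0..<n}. Y $$ (k,i) * X $$ (i,k))"
    by (subst sum.swap) (simp add: mult.commute)
  also have "\<dots> = mtr (Y * X)"
    using assms unfolding mtr_def by (intro sum.cong) (auto simp: scalar_prod_def)
  finally show ?thesis .
qed

lemma trace_bound:
  fixes A :: "complex^'n^'n"
  assumes A: "A \<in> spectral_ball"
  shows "cmod (trace A) < real CARD('n)"
proof -
  let ?n = "CARD('n)"
  obtain h where h: "bij_betw h {0..<?n} (UNIV::'n set)"
    using ex_bij_betw_nat_finite[of "UNIV::'n set"] by auto
  define M where "M = tomat h A"
  have Mc: "M \<in> carrier_mat ?n ?n" by (simp add: M_def tomat_carrier)
  obtain es where es: "char_poly M = (\<Prod>a\<leftarrow>es. [:- a, 1:])" "length es = ?n"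
    using char_poly_factorized[OF Mc] by blast
  obtain B P Q where sd: "schur_decomposition M es = (B,P,Q)"
    by (cases "schur_decomposition M es") auto
  from schur_decomposition[OF Mc es(1) sd]
  have sim: "similar_mat_wit M B P Q" and dB: "diag_mat B = es" by auto
  note sw = similar_mat_witD2[OF Mc sim]
  have root: "eigenvalue M e \<longleftrightarrow> e \<in> set es" for e
  proof -
    have "eigenvalue M e \<longleftrightarrow> poly (\<Prod>a\<leftarrow>es. [:- a, 1:]) e = 0"
      using eigenvalue_root_char_poly[OF Mc] es(1) by simp
    also have "\<dots> \<longleftrightarrow> e \<in> set es"
      by (simp add: poly_prod_list_zero_iff)
    finally show ?thesis .
  qed
  have sub: "mat_eigenvalues A \<subseteq> set es"
    using tomat_ev2[OF h] root unfolding M_def by blast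
  hence fin: "finite (mat_eigenvalues A)" by (rule finite_subset) simp
  have lt: "cmod e < 1" if "e \<in> set es" for e
  proof -
    have "e \<in> mat_eigenvalues A" using tomat_ev1[OF h] root that unfolding M_def by blast
    hence "cmod e \<le> spectral_radius A" unfolding spectral_radius_def using fin by simp
    thus ?thesis using A unfolding spectral_ball_def by simp
  qed
  have "trace A = mtr M"
    using tomat_trace[OF h] Mc unfolding M_def mtr_def by simp
  also have "M = P * (B * Q)" using sw by (simp add: assoc_mult_mat[of P ?n ?n B ?n Q ?n])
  also have "mtr (P * (B * Q)) = mtr ((B * Q) * P)"
    using sw by (intro mtr_comm) auto
  also have "(B * Q) * P = B"
    using sw by (simp add: assoc_mult_mat[of B ?n ?n Q ?n P ?n])
  also have "mtr B = (\<Sum>i\<in>{0..<?n}. es ! i)"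
    unfolding mtr_def using sw dB[symmetric] by (intro sum.cong) (auto simp: diag_mat_def)
  finally have tr: "trace A = (\<Sum>i\<in>{0..<?n}. es ! i)" .
  have "cmod (trace A) \<le> (\<Sum>i\<in>{0..<?n}. cmod (es ! i))"
    unfolding tr by (rule norm_sum)
  also have "\<dots> < (\<Sum>i\<in>{0..<?n}. 1)"
    by (rule sum_strict_mono) (auto intro: lt simp: es(2))
  finally show ?thesis by simp
qed

lemma trace_sup:
  fixes A :: "complex^'n^'n"
  assumes A: "cmod (trace A) < real CARD('n)"
  shows "A \<in> convex hull spectral_ball"
proof -
  define t where "t = trace A / of_nat CARD('n)"
  have n0: "real CARD('n) > 0" by simp
  have t: "cmod t < 1" using A n0 by (simp add: t_def norm_divide divide_less_eq)
  have trm: "trace (smat t :: complex^'n^'n) = of_nat CARD('n) * t"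
    by (simp add: trace_def Finite_Cartesian_Product.mat_def)
  have "trace (A - smat t) = 0" unfolding trace_sub trm by (simp add: t_def)
  hence "QQ (A - smat t)" by (rule trace_zero_QQ)
  hence "smat t + 1 *\<^sub>R (A - smat t) \<in> convex hull spectral_ball" using t unfolding QQ_def by blast
  thus ?thesis by simp
qed

theorem proposition4:
  shows "convex hull (spectral_ball :: (complex^'n^'n) set)
           = {A :: complex^'n^'n. cmod (trace A) < real CARD('n)}"
proof (rule antisym)
  show "convex hull (spectral_ball :: (complex^'n^'n) set) \<subseteq> {A. cmod (trace A) < real CARD('n)}"
  proof (rule hull_minimal)
    show "spectral_ball \<subseteq> {A :: complex^'n^'n. cmod (trace A) < real CARD('n)}"
      using trace_bound by blast
    show "convex {A :: complex^'n^'n. cmod (trace A) < real CARD('n)}"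
    proof (rule convexI)
      fix x y :: "complex^'n^'n" and u v :: real
      assume x: "x \<in> {A. cmod (trace A) < real CARD('n)}" and y: "y \<in> {A. cmod (trace A) < real CARD('n)}"
        and u: "0 \<le> u" and v: "0 \<le> v" and uv: "u + v = 1"
      have tr: "trace (u *\<^sub>R x + v *\<^sub>R y) = of_real u * trace x + of_real v * trace y"
        by (simp only: trace_def vector_add_component vector_scaleR_component)
           (simp add: sum.distrib sum_distrib_left scaleR_conv_of_real)
      have "cmod (trace (u *\<^sub>R x + v *\<^sub>R y)) \<le> u * cmod (trace x) + v * cmod (trace y)"
        unfolding tr using u v by (metis (no_types) abs_of_nonneg norm_mult norm_of_real norm_triangle_ineq)
      also have "\<dots> \<le> u * real CARD('n) + v * real CARD('n)"
        using x y u v by (intro add_mono mult_left_mono) auto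
      also have "\<dots> = real CARD('n)" using uv by (simp add: algebra_simps flip: distrib_right)
      finally have le: "cmod (trace (u *\<^sub>R x + v *\<^sub>R y)) \<le> real CARD('n)" .
      show "u *\<^sub>R x + v *\<^sub>R y \<in> {A. cmod (trace A) < real CARD('n)}"
      proof (cases "u = 0")
        case True thus ?thesis using uv y by simp
      next
        case False
        hence "u > 0" using u by simp
        have "cmod (trace (u *\<^sub>R x + v *\<^sub>R y)) \<le> u * cmod (trace x) + v * cmod (trace y)"
          unfolding tr using u v by (metis (no_types) abs_of_nonneg norm_mult norm_of_real norm_triangle_ineq)
        also have "\<dots> < u * real CARD('n) + v * real CARD('n)"
          using x y v \<open>u > 0\<close> by (intro add_less_le_mono mult_strict_left_mono mult_left_mono) auto
        also have "\<dots> = real CARD('n)" using uv by (simp add: algebra_simps flip: distrib_right)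
        finally show ?thesis by simp
      qed
    qed
  qed
  show "{A :: complex^'n^'n. cmod (trace A) < real CARD('n)} \<subseteq> convex hull spectral_ball"
    using trace_sup by blast
qed

end
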